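(* Let $I$ be a general ring and $a\in I$. The following are equivalent: (1) $a$ is quasipolar in $I$; (2) there exists $b\in\mathrm{comm}^2(a)$ such that $ab^2=b$ and $a^2b-a\in QN(I)$. Moreover, an element $b$ as in (2), if it exists, is unique.
   Context: A general ring is an associative ring not necessarily having an identity. For $p,q\in I$, $p*q=p+q-pq$; $Q(I)=\{q\in I\mid p*q=0=q*p \text{ for some } p\in I\}$; $\mathrm{comm}(a)=\{x\in I\mid xa=ax\}$, $\mathrm{comm}^2(a)=\{x\in I\mid xy=yx\text{ for all }y\in\mathrm{comm}(a)\}$; $QN(I)=\{q\in I\mid qx\in Q(I)\text{ for every }x\in\mathrm{comm}(q)\}$. An element $a\in I$ is quasipolar in $I$ if there is an idempotent $p=p^2\in\mathrm{comm}^2(a)$ with $a+p\in Q(I)$ and $a-ap\in QN(I)$. *)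

theory Defs
  imports Main
begin

text \<open>General rings (associative, not necessarily unital) are modelled by the
type class ring, which does not require a multiplicative identity.\<close>

definition circ :: "'a::ring \<Rightarrow> 'a \<Rightarrow> 'a" where
  "circ p q = p + q - p * q"

definition Qset :: "'a::ring set" where
  "Qset = {q. \<exists>p. circ p q = 0 \<and> circ q p = 0}"

definition comm :: "'a::ring \<Rightarrow> 'a set" where
  "comm a = {x. x * a = a * x}"

definition comm2 :: "'a::ring \<Rightarrow> 'a set" where
  "comm2 a = {x. \<forall>y\<in>comm a. x * y = y * x}"

definition QN :: "'a::ring set" where
  "QN = {q. \<forall>x\<in>comm q. q * x \<in> Qset}"

definition quasipolar :: "'a::ring \<Rightarrow> bool" where
  "quasipolar a \<longleftrightarrow> (\<exists>p. p * p = p \<and> p \<in> comm2 a \<and> a + p \<in> Qset \<and> a - a * p \<in> QN)"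

end

theory Submission
  imports Defs
begin

lemma qinv_comm:
  fixes q s x :: "'a::ring"
  assumes "circ q s = 0" "circ s q = 0" "x*s = s*x"
  shows "x*q = q*x"
proof -
  have h1: "q + s - q*s = 0" and h2: "s + q - s*q = 0" using assms by (simp_all add: circ_def)
  have sx: "s*x = x*s" using assms(3) by simp
  have sx2: "\<And>y. s*(x*y) = x*(s*y)" using assms(3) by (metis mult.assoc)
  have "x - x*q = (x - x*q) - (q+s-q*s)*(x-x*q)" using h1 by simp
  also have "\<dots> = (x - q*x) - (x - q*x)*(s+q-s*q)" by (simp add: algebra_simps sx sx2)
  also have "\<dots> = x - q*x" using h2 by simp
  finally show ?thesis by simp
qed

lemma idem_Q:
  fixes e :: "'a::ring"
  assumes "e*e = e" "e \<in> Qset"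
  shows "e = 0"
proof -
  obtain t where t: "circ t e = 0" using assms(2) unfolding Qset_def by blast
  hence "(t + e - t*e) * e = 0" by (simp add: circ_def)
  hence "t*e + e*e - t*(e*e) = 0" by (simp add: algebra_simps)
  thus ?thesis using assms(1) by simp
qed

lemma QN_neg:
  fixes c :: "'a::ring"
  assumes "c \<in> QN" shows "- c \<in> QN"
  unfolding QN_def
proof
  show "\<forall>x\<in>comm (- c). - c * x \<in> Qset"
  proof
    fix x assume "x \<in> comm (- c)"
    hence "- x \<in> comm c" by (simp add: comm_def)
    hence "c * (- x) \<in> Qset" using assms unfolding QN_def by blast
    thus "- c * x \<in> Qset" by simp
  qed
qed

lemma QN_Q:
  fixes c :: "'a::ring"
  assumes "c \<in> QN" shows "c \<in> Qset"
proof -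
  have "c * c \<in> Qset" using assms by (simp add: QN_def comm_def)
  then obtain r where r1: "circ r (c*c) = 0" and r2: "circ (c*c) r = 0" unfolding Qset_def by blast
  have "c*(c*c) = (c*c)*c" by (simp add: mult.assoc)
  hence rc: "c * r = r * c" by (rule qinv_comm[OF r1 r2])
  have e1: "r + c*c - r*(c*c) = 0" and e2: "c*c + r - c*c*r = 0" using r1 r2 by (simp_all add: circ_def)
  define s where "s = r - c + c*r"
  have "circ s c = r + c*c - r*(c*c)" by (simp add: s_def circ_def algebra_simps rc)
  also have "\<dots> = 0" using e1 by simp
  finally have 1: "circ s c = 0" .
  have "circ c s = r + c*c - c*(c*r)" by (simp add: s_def circ_def algebra_simps)
  also have "\<dots> = 0" using e2 by (simp add: mult.assoc add.commute)
  finally have 2: "circ c s = 0" .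
  show ?thesis unfolding Qset_def using 1 2 by blast
qed


lemma cl: fixes x y z :: "'a::ring" shows "x*y = y*x \<Longrightarrow> x*(y*z) = y*(x*z)"
  by (simp flip: mult.assoc)

lemma idem_diff:
  fixes x y :: "'a::ring"
  assumes "x*x = x" "y*y = y" "y*x = x*y"
  shows "(x - x*y)*(x - x*y) = x - x*y"
proof -
  have r1: "\<And>z. x*(x*z) = x*z" using assms(1) by (simp flip: mult.assoc)
  have r2: "\<And>z. y*(y*z) = y*z" using assms(2) by (simp flip: mult.assoc)
  have r3: "\<And>z. y*(x*z) = x*(y*z)" using assms(3) by (rule cl)
  show ?thesis using assms by (simp add: algebra_simps r1 r2 r3)
qed

lemma fwd:
  fixes a :: "'a::ring"
  assumes "quasipolar a"
  shows "\<exists>b\<in>comm2 a. a * (b * b) = b \<and> a * a * b - a \<in> QN"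
proof -
  obtain p where pp: "p*p = p" and pc: "p \<in> comm2 a" and pQ: "a + p \<in> Qset" and pN: "a - a*p \<in> QN"
    using assms unfolding quasipolar_def by blast
  obtain q where q1: "circ q (a+p) = 0" and q2: "circ (a+p) q = 0" using pQ unfolding Qset_def by blast
  have pa: "p*a = a*p" using pc by (simp add: comm2_def comm_def)
  have "a*(a+p) = (a+p)*a" using pa by (simp add: algebra_simps)
  hence qa: "a*q = q*a" by (rule qinv_comm[OF q1 q2])
  have qp: "p*q = q*p" using pc qa by (simp add: comm2_def comm_def)
  define b where "b = q*p - p"
  have h1: "q + (a+p) - q*(a+p) = 0" using q1 by (simp add: circ_def)
  hence "(q + (a+p) - q*(a+p))*p = 0" by simp
  hence "q*p + a*p + p - q*(a*p) - q*p = 0" using pp by (simp add: algebra_simps)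
  hence key: "q*(a*p) = a*p + p" by (simp add: algebra_simps)
  have "a*(q*p) = q*(a*p)" by (simp flip: mult.assoc add: qa)
  hence ab: "a*b = p" using key by (simp add: b_def algebra_simps)
  have "p*(q*p) = (q*p)*p" by (simp flip: mult.assoc add: qp)
  also have "\<dots> = q*p" by (simp add: mult.assoc pp)
  finally have pqp: "p*(q*p) = q*p" .
  have "a*(b*b) = (a*b)*b" by (simp add: mult.assoc)
  also have "\<dots> = b" using ab pqp pp by (simp add: b_def algebra_simps)
  finally have abb: "a*(b*b) = b" .
  moreover have "b \<in> comm2 a"
    unfolding comm2_def
  proof
    show "\<forall>y\<in>comm a. b * y = y * b"
    proof
      fix y assume y: "y \<in> comm a"
      hence py: "p*y = y*p" using pc by (simp add: comm2_def)
      have "y*(a+p) = (a+p)*y" using y py by (simp add: comm_def algebra_simps)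
      hence qy: "y*q = q*y" by (rule qinv_comm[OF q1 q2])
      have py2: "\<And>z. p*(y*z) = y*(p*z)" using py by (rule cl)
      have qy2: "\<And>z. q*(y*z) = y*(q*z)" using qy[symmetric] by (rule cl)
      have "q*p*y = y*(q*p)" using py qy[symmetric] by (simp add: mult.assoc py2 qy2)
      thus "b*y = y*b" using py by (simp add: b_def algebra_simps)
    qed
  qed
  moreover have "a*a*b - a \<in> QN"
  proof -
    have "a*a*b - a = - (a - a*p)" using ab by (simp add: mult.assoc)
    thus ?thesis using QN_neg[OF pN] by simp
  qed
  ultimately show ?thesis by blast
qed

lemma bwd:
  fixes a b :: "'a::ring"
  assumes bc: "b \<in> comm2 a" and abb: "a * (b * b) = b" and N: "a * a * b - a \<in> QN"
  shows "quasipolar a"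
proof -
  define p where "p = a*b"
  have ba: "b*a = a*b" using bc by (simp add: comm2_def comm_def)
  have ba2: "\<And>z. b*(a*z) = a*(b*z)" using ba by (rule cl)
  have pp: "p*p = p" unfolding p_def using abb by (simp add: mult.assoc ba2)
  have pb: "p*b = b" unfolding p_def using abb by (simp add: mult.assoc)
  have bp: "b*p = b" unfolding p_def using abb by (simp add: mult.assoc ba2)
  have pa: "p*a = a*p" unfolding p_def by (simp add: mult.assoc ba)
  have pc2: "p \<in> comm2 a"
    unfolding comm2_def
  proof
    show "\<forall>y\<in>comm a. p * y = y * p"
    proof
      fix y assume y: "y \<in> comm a"
      hence hby: "b*y = y*b" using bc by (simp add: comm2_def)
      have ay: "a*y = y*a" using y by (simp add: comm_def)
      have by2: "\<And>z. b*(y*z) = y*(b*z)" using hby by (rule cl)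
      have ay2: "\<And>z. a*(y*z) = y*(a*z)" using ay by (rule cl)
      show "p*y = y*p" unfolding p_def by (simp add: mult.assoc hby ay by2 ay2)
    qed
  qed
  define c where "c = a - a*p"
  have "c = - (a*a*b - a)" unfolding c_def p_def by (simp add: mult.assoc)
  hence cN: "c \<in> QN" using QN_neg[OF N] by simp
  obtain s where s1: "circ s c = 0" and s2: "circ c s = 0" using QN_Q[OF cN] unfolding Qset_def by blast
  have e1: "s + c - s*c = 0" and e2: "c + s - c*s = 0" using s1 s2 by (simp_all add: circ_def)
  have "a*c = c*a" unfolding c_def using pa by (simp add: algebra_simps mult.assoc)
  hence sa: "a*s = s*a" by (rule qinv_comm[OF s1 s2])
  have cp: "c*p = 0" unfolding c_def using pp by (simp add: algebra_simps)
  have pa2: "\<And>z. p*(a*z) = a*(p*z)" using pa by (rule cl)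
  have pc: "p*c = 0" unfolding c_def using pp pa by (simp add: algebra_simps pa2)
  have cb: "c*b = 0" unfolding c_def using pb by (simp add: algebra_simps p_def)
  have bc0: "b*c = 0" unfolding c_def by (simp add: algebra_simps ba ba2 bp)
  have sE: "s = c*s - c" and sE2: "s = s*c - c" using e1 e2 by (simp_all add: algebra_simps eq_diff_eq)
  have ps: "p*s = 0" using pc by (subst sE) (simp add: algebra_simps flip: mult.assoc)
  have sp: "s*p = 0" using cp by (subst sE2) (simp add: algebra_simps)
  have sap: "s*(a*p) = 0" using sp by (simp flip: mult.assoc add: sa[symmetric]) (simp add: mult.assoc)
  have asp: "a*(p*s) = 0" using ps by simp
  define t where "t = p + b + s"
  have "circ t (a+p) = s + c - s*c"
    unfolding t_def c_def circ_def using pp pa bp ba sp sap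
    by (simp add: algebra_simps p_def)
  hence 1: "circ t (a+p) = 0" using e1 by simp
  have "circ (a+p) t = c + s - c*s"
    unfolding t_def c_def circ_def using pp pb ps asp abb
    by (simp add: algebra_simps p_def)
  hence 2: "circ (a+p) t = 0" using e2 by simp
  have "a + p \<in> Qset" unfolding Qset_def using 1 2 by blast
  thus ?thesis unfolding quasipolar_def using pp pc2 cN c_def by blast
qed

lemma uniq_half:
  fixes a b1 b2 :: "'a::ring"
  assumes b1c: "b1 \<in> comm2 a" and a1: "a * (b1 * b1) = b1"
    and b2c: "b2 \<in> comm2 a" and a2: "a * (b2 * b2) = b2" and N2: "a * a * b2 - a \<in> QN"
  shows "a*b1 = a*b1*(a*b2)"
proof -
  have ba1: "b1*a = a*b1" using b1c by (simp add: comm2_def comm_def)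
  have ba2: "b2*a = a*b2" using b2c by (simp add: comm2_def comm_def)
  have b12: "b1*b2 = b2*b1" using b1c ba2 by (simp add: comm2_def comm_def)
  have ba1': "\<And>z. b1*(a*z) = a*(b1*z)" using ba1 by (rule cl)
  have ba2': "\<And>z. b2*(a*z) = a*(b2*z)" using ba2 by (rule cl)
  have b12': "\<And>z. b1*(b2*z) = b2*(b1*z)" using b12 by (rule cl)
  define c where "c = a*a*b2 - a"
  have "b1*c = c*b1" unfolding c_def by (simp add: algebra_simps ba1 ba1' b12)
  hence "- b1 \<in> comm c" by (simp add: comm_def)
  hence Q: "c * (- b1) \<in> Qset" using N2 unfolding QN_def c_def by blast
  define e where "e = a*b1 - a*b1*(a*b2)"
  have "c*(-b1) = e" unfolding c_def e_def by (simp add: algebra_simps ba1 ba1' b12)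
  hence eQ: "e \<in> Qset" using Q by simp
  have p1: "a*b1*(a*b1) = a*b1" using a1 by (simp add: mult.assoc ba1')
  have p2: "a*b2*(a*b2) = a*b2" using a2 by (simp add: mult.assoc ba2')
  have p12: "a*b2*(a*b1) = a*b1*(a*b2)" by (simp add: mult.assoc ba1' ba2' b12)
  have "e*e = e" unfolding e_def by (rule idem_diff[OF p1 p2 p12])
  hence "e = 0" using eQ by (rule idem_Q)
  thus ?thesis unfolding e_def by simp
qed

lemma uniq:
  fixes a b1 b2 :: "'a::ring"
  assumes b1c: "b1 \<in> comm2 a" and a1: "a * (b1 * b1) = b1" and N1: "a * a * b1 - a \<in> QN"
    and b2c: "b2 \<in> comm2 a" and a2: "a * (b2 * b2) = b2" and N2: "a * a * b2 - a \<in> QN"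
  shows "b1 = b2"
proof -
  have ba1: "b1*a = a*b1" using b1c by (simp add: comm2_def comm_def)
  have ba2: "b2*a = a*b2" using b2c by (simp add: comm2_def comm_def)
  have b12: "b1*b2 = b2*b1" using b1c ba2 by (simp add: comm2_def comm_def)
  have ba1': "\<And>z. b1*(a*z) = a*(b1*z)" using ba1 by (rule cl)
  have ba2': "\<And>z. b2*(a*z) = a*(b2*z)" using ba2 by (rule cl)
  have x: "a*b1 = a*b1*(a*b2)" by (rule uniq_half[OF b1c a1 b2c a2 N2])
  have y: "a*b2 = a*b2*(a*b1)" by (rule uniq_half[OF b2c a2 b1c a1 N1])
  have p12: "a*b1*(a*b2) = a*b2*(a*b1)" by (simp add: mult.assoc ba1' ba2' b12)
  have ab: "a*b1 = a*b2" using trans[OF trans[OF x p12] y[symmetric]] .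
  have "b1 = b1*(a*b1)" using a1 by (simp add: ba1')
  also have "\<dots> = b1*(a*b2)" using ab by simp
  also have "\<dots> = a*b1*b2" by (simp add: mult.assoc ba1')
  also have "\<dots> = a*b2*b2" using ab by simp
  also have "\<dots> = b2" using a2 by (simp add: mult.assoc)
  finally show ?thesis .
qed

theorem theorem2p8:
  fixes a :: "'a::ring"
  shows "(quasipolar a \<longleftrightarrow>
            (\<exists>b\<in>comm2 a. a * (b * b) = b \<and> a * a * b - a \<in> QN)) \<and>
         (\<forall>b1 b2. b1 \<in> comm2 a \<and> a * (b1 * b1) = b1 \<and> a * a * b1 - a \<in> QN \<and>
                  b2 \<in> comm2 a \<and> a * (b2 * b2) = b2 \<and> a * a * b2 - a \<in> QN \<longrightarrow> b1 = b2)"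
  using fwd bwd uniq by blast

end
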